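(* Let $T$ be a key with at most $n$ rows. Then $$\sum_{Q}\beta^{|\mathrm{wt}(Q)|-|\mathrm{wt}(T)|}x^{\mathrm{wt}(Q)}=\mathfrak{L}^{(\beta)}_{\mathrm{wt}(\mathrm{cap}_n(T))},$$ where the sum is over reverse set-valued tableaux $Q$ of the same shape as $T$ with $K_-(L(Q))\le T$ entrywise and $\max(Q)\le n$.
   Context: Tableaux are in English convention; $T_c$ is the set of entries of column $c$; $|\mathrm{wt}(T)|$ denotes the number of cells of $T$. A key is a tableau with strictly increasing columns and $T_1\supseteq T_2\supseteq\cdots$. For a key $T$ with at most $n$ rows, $\mathrm{cap}_n(T)$ replaces, in each column, entries larger than $n$ by the largest integers in $[n]$ missing from that column, then sorts each column increasingly. For a tableau with entries in $[n]$, $\mathrm{wt}$ is the weak composition counting occurrences of each $i\in[n]$. A reverse set-valued tableau (RSVT) is a filling of a Young diagram with nonempty finite subsets of $\mathbb{Z}_{>0}$ such that $\min Q(r,c)\ge\max Q(r,c+1)$ and $\min Q(r,c)>\max Q(r+1,c)$; $\max(Q)$ is its largest entry; $\mathrm{wt}(Q)_i$ is the number of cells containing $i$; $L(Q)$ keeps the largest element of each cell. For finite $S,T$, $T\trianglerighteq S$ is obtained by going through $S$ from smallest to largest, each $s$ picking the smallest not-yet-picked $t\in T$ with $t\ge s$, and taking the picked set; $K_-(L(Q))$ is the tableau of the same shape whose column $i$ is $L(Q)_1\trianglerighteq(L(Q)_2\trianglerighteq(\cdots\trianglerighteq L(Q)_i))$ sorted increasingly. For a weak composition $\alpha$ with $n$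 parts, $\mathrm{key}(\alpha)$ is the key whose column $c$ is $\{i:\alpha_i\ge c\}$, $|\alpha|=\sum\alpha_i$, and the Lascoux polynomial is $\mathfrak{L}^{(\beta)}_\alpha=\sum_{Q}\beta^{|\mathrm{wt}(Q)|-|\alpha|}x^{\mathrm{wt}(Q)}$ over RSVTs $Q$ with entries subsets of $[n]$, of the same shape as $\mathrm{key}(\alpha)$, with $K_-(L(Q))\le\mathrm{key}(\alpha)$ entrywise. *)

theory Defs
  imports Main
begin

text \<open>A tableau is a list of columns; each column is listed top to bottom
(English convention, row 1 on top). Indices are 0-based in the lists.\<close>

type_synonym 'a tableau = "'a list list"

definition shape :: "'a tableau \<Rightarrow> nat list" where
  "shape T = map length T"

definition ncells :: "'a tableau \<Rightarrow> nat" where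
  "ncells T = sum_list (shape T)"

definition is_key :: "nat tableau \<Rightarrow> bool" where
  "is_key T \<longleftrightarrow>
     (\<forall>c<length T. T!c \<noteq> [] \<and> sorted_wrt (<) (T!c) \<and> 0 \<notin> set (T!c)) \<and>
     (\<forall>c. Suc c < length T \<longrightarrow> set (T!Suc c) \<subseteq> set (T!c))"

definition at_most_rows :: "nat \<Rightarrow> 'a tableau \<Rightarrow> bool" where
  "at_most_rows n T \<longleftrightarrow> (\<forall>c<length T. length (T!c) \<le> n)"

definition cap_col :: "nat \<Rightarrow> nat list \<Rightarrow> nat list" where
  "cap_col n C =
     (let k = length (filter (\<lambda>c. n < c) C);
          M = {1..n} - set C
      in sorted_list_of_set ((set C \<inter> {1..n}) \<union> set (take k (rev (sorted_list_of_set M)))))"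

definition cap :: "nat \<Rightarrow> nat tableau \<Rightarrow> nat tableau" where
  "cap n T = map (cap_col n) T"

text \<open>Weight of a tableau with entries in [n], as a weak composition with n parts,
represented as a function supported on {1..n}.\<close>
definition wt_tab :: "nat \<Rightarrow> nat tableau \<Rightarrow> nat \<Rightarrow> nat" where
  "wt_tab n T i = (if 1 \<le> i \<and> i \<le> n then (\<Sum>col\<leftarrow>T. count_list col i) else 0)"

definition wsize :: "nat \<Rightarrow> (nat \<Rightarrow> nat) \<Rightarrow> nat" where
  "wsize n \<alpha> = (\<Sum>i=1..n. \<alpha> i)"

definition key_of :: "nat \<Rightarrow> (nat \<Rightarrow> nat) \<Rightarrow> nat tableau" where
  "key_of n \<alpha> =
     map (\<lambda>c. filter (\<lambda>i. c \<le> \<alpha> i) [1..<Suc n]) [1..<Suc (Max (insert 0 (\<alpha> ` {1..n})))]"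

definition is_rsvt :: "nat set tableau \<Rightarrow> bool" where
  "is_rsvt Q \<longleftrightarrow>
     (\<forall>c<length Q. Q!c \<noteq> []) \<and>
     (\<forall>c. Suc c < length Q \<longrightarrow> length (Q!Suc c) \<le> length (Q!c)) \<and>
     (\<forall>c<length Q. \<forall>r<length (Q!c). Q!c!r \<noteq> {} \<and> finite (Q!c!r) \<and> 0 \<notin> Q!c!r) \<and>
     (\<forall>c r. Suc c < length Q \<and> r < length (Q!Suc c) \<longrightarrow> Max (Q!Suc c!r) \<le> Min (Q!c!r)) \<and>
     (\<forall>c r. c < length Q \<and> Suc r < length (Q!c) \<longrightarrow> Max (Q!c!Suc r) < Min (Q!c!r))"

definition rsvt_entries :: "nat set tableau \<Rightarrow> nat set" where
  "rsvt_entries Q = \<Union> (set (concat Q))"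

definition rsvt_size :: "nat set tableau \<Rightarrow> nat" where
  "rsvt_size Q = sum_list (map card (concat Q))"

definition wt_rsvt :: "nat set tableau \<Rightarrow> nat \<Rightarrow> nat" where
  "wt_rsvt Q i = length (filter (\<lambda>S. i \<in> S) (concat Q))"

definition xpow :: "nat \<Rightarrow> (nat \<Rightarrow> 'a::comm_monoid_mult) \<Rightarrow> (nat \<Rightarrow> nat) \<Rightarrow> 'a" where
  "xpow n x w = (\<Prod>i=1..n. x i ^ w i)"

definition Lmax :: "nat set tableau \<Rightarrow> nat tableau" where
  "Lmax Q = map (map Max) Q"

fun pick :: "nat set \<Rightarrow> nat list \<Rightarrow> nat set" where
  "pick T [] = {}"
| "pick T (s # ss) =
     (let C = {t \<in> T. s \<le> t}
      in if C = {} then pick T ss else insert (Min C) (pick (T - {Min C}) ss))"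

definition domin :: "nat set \<Rightarrow> nat set \<Rightarrow> nat set" where
  "domin T S = pick T (sorted_list_of_set S)"

definition K_minus :: "nat tableau \<Rightarrow> nat tableau" where
  "K_minus Lt =
     map (\<lambda>i. sorted_list_of_set (foldr domin (map set (take i Lt)) (set (Lt!i)))) [0..<length Lt]"

definition entrywise_le :: "nat tableau \<Rightarrow> nat tableau \<Rightarrow> bool" where
  "entrywise_le A B \<longleftrightarrow> list_all2 (list_all2 (\<le>)) A B"

definition lascoux :: "nat \<Rightarrow> 'a::comm_ring_1 \<Rightarrow> (nat \<Rightarrow> 'a) \<Rightarrow> (nat \<Rightarrow> nat) \<Rightarrow> 'a" where
  "lascoux n \<beta> x \<alpha> =
     (\<Sum>Q\<in>{Q. is_rsvt Q \<and> rsvt_entries Q \<subseteq> {1..n} \<and> shape Q = shape (key_of n \<alpha>) \<and>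
             entrywise_le (K_minus (Lmax Q)) (key_of n \<alpha>)}.
        \<beta> ^ (rsvt_size Q - wsize n \<alpha>) * xpow n x (wt_rsvt Q))"

end

theory Submission
  imports Defs
begin

lemma nth_le_iff:
  assumes "sorted_wrt (<) (A::nat list)" "i < length A"
  shows "A!i \<le> v \<longleftrightarrow> Suc i \<le> card {a\<in>set A. a \<le> v}"
proof
  assume h: "A!i \<le> v"
  have "set (take (Suc i) A) \<subseteq> {a\<in>set A. a \<le> v}"
  proof
    fix a assume "a \<in> set (take (Suc i) A)"
    then obtain j where j: "j < length (take (Suc i) A)" "a = take (Suc i) A ! j"
      by (auto simp: in_set_conv_nth)
    then have "j \<le> i" "a = A!j" by auto
    then have "a \<le> A!i" using assms
      by (metis le_eq_less_or_eq order.strict_implies_order sorted_wrt_nth_less)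
    then show "a \<in> {a\<in>set A. a \<le> v}" using h \<open>a = A!j\<close> j assms(2)
      by (metis (mono_tags) \<open>j \<le> i\<close> dual_order.strict_trans2 le_imp_less_Suc mem_Collect_eq nth_mem order.trans)
  qed
  moreover have "distinct A" using assms(1) by (simp add: strict_sorted_iff)
  ultimately have "card (set (take (Suc i) A)) \<le> card {a\<in>set A. a \<le> v}"
    by (intro card_mono) auto
  moreover have "card (set (take (Suc i) A)) = Suc i"
    using \<open>distinct A\<close> assms(2) by (simp add: distinct_card)
  ultimately show "Suc i \<le> card {a\<in>set A. a \<le> v}" by simp
next
  assume h: "Suc i \<le> card {a\<in>set A. a \<le> v}"
  show "A!i \<le> v"
  proof (rule ccontr)
    assume "\<not> A!i \<le> v"
    have "{a\<in>set A. a \<le> v} \<subseteq> set (take i A)"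
    proof
      fix a assume a: "a \<in> {a\<in>set A. a \<le> v}"
      then obtain j where j: "j < length A" "a = A!j" by (auto simp: in_set_conv_nth)
      have "j < i"
      proof (rule ccontr)
        assume "\<not> j < i"
        then have "A!i \<le> A!j" using assms j
          by (metis le_eq_less_or_eq not_less order.strict_implies_order sorted_wrt_nth_less)
        then show False using a j \<open>\<not> A!i \<le> v\<close> by auto
      qed
      then show "a \<in> set (take i A)" using j
        by (metis in_set_conv_nth length_take min_less_iff_conj nth_take)
    qed
    then have "card {a\<in>set A. a \<le> v} \<le> card (set (take i A))" by (intro card_mono) auto
    also have "\<dots> \<le> i" by (metis card_length length_take min.bounded_iff order.refl)
    finally show False using h by simp
  qed
qed

lemma le_iff_cnt:
  assumes "sorted_wrt (<) (A::nat list)" "sorted_wrt (<) B" "length A = length B"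
  shows "list_all2 (\<le>) A B \<longleftrightarrow> (\<forall>v. card {b\<in>set B. b \<le> v} \<le> card {a\<in>set A. a \<le> v})"
proof
  assume h: "list_all2 (\<le>) A B"
  show "\<forall>v. card {b\<in>set B. b \<le> v} \<le> card {a\<in>set A. a \<le> v}"
  proof
    fix v
    define p where "p = card {b\<in>set B. b \<le> v}"
    show "p \<le> card {a\<in>set A. a \<le> v}"
    proof (cases p)
      case 0 then show ?thesis by simp
    next
      case (Suc q)
      have "p \<le> card (set B)" unfolding p_def by (intro card_mono) auto
      also have "\<dots> \<le> length B" by (rule card_length)
      finally have q: "q < length B" using Suc by simp
      then have "B!q \<le> v" using nth_le_iff[OF assms(2) q] Suc p_def by simp
      moreover have "A!q \<le> B!q" using h q assms(3) by (simp add: list_all2_conv_all_nth)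
      ultimately have "A!q \<le> v" by simp
      then show ?thesis using nth_le_iff[OF assms(1)] q assms(3) Suc by simp
    qed
  qed
next
  assume h: "\<forall>v. card {b\<in>set B. b \<le> v} \<le> card {a\<in>set A. a \<le> v}"
  show "list_all2 (\<le>) A B"
    unfolding list_all2_conv_all_nth
  proof (intro conjI allI impI)
    fix i assume i: "i < length A"
    have "Suc i \<le> card {b\<in>set B. b \<le> B!i}" using nth_le_iff[OF assms(2), of i "B!i"] i assms(3) by simp
    also have "\<dots> \<le> card {a\<in>set A. a \<le> B!i}" using h by blast
    finally show "A!i \<le> B!i" using nth_le_iff[OF assms(1) i] by simp
  qed (rule assms(3))
qed

lemma N_char:
  assumes "finite (M::nat set)"
  shows "set (take k (rev (sorted_list_of_set M))) = {e\<in>M. card {f\<in>M. e<f} < k}"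
proof -
  define xs where "xs = rev (sorted_list_of_set M)"
  have sw: "sorted_wrt (>) xs" unfolding xs_def
    using sorted_list_of_set.strict_sorted_key_list_of_set[of M] by (simp add: sorted_wrt_rev)
  have dis: "distinct xs" unfolding xs_def using assms by simp
  have sx: "set xs = M" unfolding xs_def using assms by simp
  have key: "{f\<in>M. xs!i < f} = set (take i xs)" if i: "i < length xs" for i
  proof
    show "{f\<in>M. xs!i < f} \<subseteq> set (take i xs)"
    proof
      fix f assume f: "f \<in> {f\<in>M. xs!i < f}"
      then obtain j where j: "j < length xs" "f = xs!j" using sx by (auto simp: in_set_conv_nth)
      have "j < i"
      proof (rule ccontr)
        assume "\<not> j < i"
        then have "xs!j \<le> xs!i" using sw j i
          by (metis le_eq_less_or_eq not_less order.strict_implies_order sorted_wrt_nth_less)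
        then show False using f j by auto
      qed
      then show "f \<in> set (take i xs)" using j
        by (metis in_set_conv_nth length_take min_less_iff_conj nth_take)
    qed
  next
    show "set (take i xs) \<subseteq> {f\<in>M. xs!i < f}"
    proof
      fix f assume "f \<in> set (take i xs)"
      then obtain j where j: "j < length (take i xs)" "f = take i xs ! j" by (auto simp: in_set_conv_nth)
      then have "j < i" "f = xs!j" by auto
      then have "xs!i < f" using sw i sorted_wrt_nth_less[OF sw \<open>j < i\<close> i] by simp
      moreover have "f \<in> M" using \<open>f = xs!j\<close> \<open>j < i\<close> i sx by auto
      ultimately show "f \<in> {f\<in>M. xs!i < f}" by simp
    qed
  qed
  have cardk: "card {f\<in>M. xs!i < f} = i" if "i < length xs" for i
    using key[OF that] dis that by (simp add: distinct_card)
  show ?thesis unfolding xs_def[symmetric]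
  proof
    show "set (take k xs) \<subseteq> {e\<in>M. card {f\<in>M. e<f} < k}"
    proof
      fix e assume "e \<in> set (take k xs)"
      then obtain j where j: "j < length (take k xs)" "e = take k xs ! j" by (auto simp: in_set_conv_nth)
      then have "j < k" "j < length xs" "e = xs!j" by auto
      then show "e \<in> {e\<in>M. card {f\<in>M. e<f} < k}" using cardk sx by auto
    qed
  next
    show "{e\<in>M. card {f\<in>M. e<f} < k} \<subseteq> set (take k xs)"
    proof
      fix e assume e: "e \<in> {e\<in>M. card {f\<in>M. e<f} < k}"
      then obtain j where j: "j < length xs" "e = xs!j" using sx by (auto simp: in_set_conv_nth)
      then have "j < k" using cardk e by auto
      then show "e \<in> set (take k xs)" using j
        by (metis in_set_conv_nth length_take min_less_iff_conj nth_take)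
    qed
  qed
qed

definition capN :: "nat \<Rightarrow> nat list \<Rightarrow> nat set" where
  "capN n C = set (take (length (filter (\<lambda>c. n < c) C)) (rev (sorted_list_of_set ({1..n} - set C))))"

lemma capN_char: "capN n C = {e \<in> {1..n} - set C. card {f\<in>{1..n} - set C. e < f} < length (filter (\<lambda>c. n < c) C)}"
  unfolding capN_def by (rule N_char) simp

lemma cap_col_eq: "cap_col n C = sorted_list_of_set ((set C \<inter> {1..n}) \<union> capN n C)"
  unfolding cap_col_def capN_def Let_def by simp

lemma capN_sub: "capN n C \<subseteq> {1..n} - set C"
  unfolding capN_char by auto

lemma set_cap_col: "set (cap_col n C) = (set C \<inter> {1..n}) \<union> capN n C"
  unfolding cap_col_eq by (simp add: finite_subset[OF capN_sub])

lemma set_cap_col_sub: "set (cap_col n C) \<subseteq> {1..n}"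
  using capN_sub set_cap_col by blast

lemma sorted_cap_col: "sorted_wrt (<) (cap_col n C)"
  unfolding cap_col_eq by simp

lemma distinct_cap_col: "distinct (cap_col n C)"
  unfolding cap_col_eq by simp

lemma card_cap_col:
  assumes "sorted_wrt (<) C" "0 \<notin> set C" "length C \<le> n"
  shows "card (set (cap_col n C)) = length C" "length (cap_col n C) = length C"
proof -
  define M where "M = {1..n} - set C"
  define k where "k = length (filter (\<lambda>c. n < c) C)"
  have dC: "distinct C" using assms(1) by (simp add: strict_sorted_iff)
  have k: "k = card {c\<in>set C. n < c}" unfolding k_def
    using distinct_card[of "filter (\<lambda>c. n < c) C"] dC by simp
  have pos: "\<forall>c\<in>set C. 1 \<le> c" using assms(2) by (metis Suc_leI gr0I One_nat_def)
  have split: "set C = (set C \<inter> {1..n}) \<union> {c\<in>set C. n < c}" using pos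
    by (auto simp: not_less)
  have cC: "card (set C) = card (set C \<inter> {1..n}) + k" unfolding k
    by (subst split) (rule card_Un_disjoint, auto)
  have cM: "card M = n - card (set C \<inter> {1..n})" unfolding M_def
  proof -
    have "{1..n} - set C = {1..n} - (set C \<inter> {1..n})" by auto
    then show "card ({1..n} - set C) = n - card (set C \<inter> {1..n})"
      by (simp add: card_Diff_subset)
  qed
  have lenC: "card (set C) = length C" using dC by (simp add: distinct_card)
  have "k \<le> card M" using cC cM lenC assms(3) by simp
  have cN: "card (capN n C) = k" unfolding capN_def k_def[symmetric] M_def[symmetric]
    by (subst distinct_card) (use \<open>k \<le> card M\<close> in \<open>auto simp: M_def\<close>)
  have "card (set (cap_col n C)) = card (set C \<inter> {1..n}) + card (capN n C)"
    unfolding set_cap_col using capN_sub by (intro card_Un_disjoint) (auto intro: finite_subset)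
  then show c: "card (set (cap_col n C)) = length C" using cN cC lenC by simp
  then show "length (cap_col n C) = length C" using distinct_card[OF distinct_cap_col] by simp
qed

lemma cap_col_mono:
  assumes "set C2 \<subseteq> set C1" "distinct C1" "distinct C2"
  shows "set (cap_col n C2) \<subseteq> set (cap_col n C1)"
proof
  fix x assume x: "x \<in> set (cap_col n C2)"
  have kk: "length (filter (\<lambda>c. n < c) C2) \<le> length (filter (\<lambda>c. n < c) C1)"
  proof -
    have "length (filter (\<lambda>c. n < c) C1) = card {c\<in>set C1. n < c}"
      using distinct_card[OF distinct_filter[OF assms(2)]] by simp
    moreover have "length (filter (\<lambda>c. n < c) C2) = card {c\<in>set C2. n < c}"
      using distinct_card[OF distinct_filter[OF assms(3)]] by simp
    moreover have "card {c\<in>set C2. n < c} \<le> card {c\<in>set C1. n < c}"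
      using assms(1) by (intro card_mono) auto
    ultimately show ?thesis by simp
  qed
  show "x \<in> set (cap_col n C1)"
  proof (cases "x \<in> set C2 \<inter> {1..n}")
    case True then show ?thesis using assms(1) set_cap_col by auto
  next
    case False
    then have xN: "x \<in> capN n C2" using x set_cap_col by auto
    show ?thesis
    proof (cases "x \<in> set C1")
      case True
      have "x \<in> {1..n}" using xN capN_sub by blast
      then show ?thesis using True by (simp add: set_cap_col)
    next
      case False
      have "card {f\<in>{1..n} - set C1. x < f} \<le> card {f\<in>{1..n} - set C2. x < f}"
        using assms(1) by (intro card_mono) auto
      then have "x \<in> capN n C1" using xN False kk unfolding capN_char by auto
      then show ?thesis using set_cap_col by auto
    qed
  qed
qed

lemma col_lemma:
  assumes C: "sorted_wrt (<) C" "0 \<notin> set C" "length C \<le> n"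
    and X: "X \<subseteq> {..n}"
  shows "list_all2 (\<le>) (sorted_list_of_set X) C \<longleftrightarrow> list_all2 (\<le>) (sorted_list_of_set X) (cap_col n C)"
proof -
  have fX: "finite X" using X finite_subset by blast
  define m where "m = length C"
  define S where "S = set C"
  define S' where "S' = set (cap_col n C)"
  have lc: "length (cap_col n C) = m" "card S' = m" using card_cap_col[OF C] m_def S'_def by auto
  have cS: "card S = m" using C(1) m_def S_def by (simp add: strict_sorted_iff distinct_card)
  show ?thesis
  proof (cases "card X = m")
    case False
    then show ?thesis using lc m_def fX by (metis length_sorted_list_of_set list_all2_lengthD)
  next
    case cX: True
    have sX: "sorted_wrt (<) (sorted_list_of_set X)" by simp
    have e1: "list_all2 (\<le>) (sorted_list_of_set X) C \<longleftrightarrow> (\<forall>v. card {b\<in>S. b \<le> v} \<le> card {a\<in>X. a \<le> v})"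
      using le_iff_cnt[OF sX C(1)] cX fX m_def S_def by simp
    have e2: "list_all2 (\<le>) (sorted_list_of_set X) (cap_col n C) \<longleftrightarrow> (\<forall>v. card {b\<in>S'. b \<le> v} \<le> card {a\<in>X. a \<le> v})"
      using le_iff_cnt[OF sX sorted_cap_col] cX fX lc S'_def by simp
    have S'sub: "S' \<subseteq> {1..n}" using set_cap_col_sub S'_def by simp
    have SS': "S \<inter> {1..n} \<subseteq> S'" using set_cap_col S_def S'_def by auto
    have cXn: "card {a\<in>X. a \<le> v} = m" if "n \<le> v" for v
    proof -
      have "{a\<in>X. a \<le> v} = X" using X that by auto
      then show ?thesis using cX by simp
    qed
    have A: "card {b\<in>S. b \<le> v} \<le> card {b\<in>S'. b \<le> v}" for v
    proof (cases "n \<le> v")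
      case True
      have "{b\<in>S'. b \<le> v} = S'" using S'sub True by auto
      moreover have "card {b\<in>S. b \<le> v} \<le> card S" unfolding S_def by (intro card_mono) auto
      ultimately show ?thesis using lc cS by simp
    next
      case False
      have "{b\<in>S. b \<le> v} \<subseteq> {b\<in>S'. b \<le> v}"
      proof
        fix b assume b: "b \<in> {b\<in>S. b \<le> v}"
        then have "b \<noteq> 0" using C(2) S_def by (metis (mono_tags) mem_Collect_eq)
        then have "b \<in> S \<inter> {1..n}" using b False by auto
        then show "b \<in> {b\<in>S'. b \<le> v}" using SS' b by auto
      qed
      then show ?thesis unfolding S'_def by (intro card_mono) auto
    qed
    have B: "card {b\<in>S'. b \<le> v} \<le> card {a\<in>X. a \<le> v}" if h: "\<forall>v. card {b\<in>S. b \<le> v} \<le> card {a\<in>X. a \<le> v}" for v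
    proof (cases "n \<le> v")
      case True
      have "{b\<in>S'. b \<le> v} = S'" using S'sub True by auto
      then show ?thesis using cXn[OF True] lc by simp
    next
      case False
      show ?thesis
      proof (cases "\<exists>e\<in>capN n C. e \<le> v")
        case False
        then have "{b\<in>S'. b \<le> v} \<subseteq> {b\<in>S. b \<le> v}" using set_cap_col S_def S'_def by auto
        then have "card {b\<in>S'. b \<le> v} \<le> card {b\<in>S. b \<le> v}" unfolding S_def by (intro card_mono) auto
        then show ?thesis using h by (meson le_trans)
      next
        case True
        then obtain e where e: "e \<in> capN n C" "e \<le> v" by blast
        have up: "{v<..n} \<subseteq> S'"
        proof
          fix f assume f: "f \<in> {v<..n}"
          show "f \<in> S'"
          proof (cases "f \<in> S")
            case True then show ?thesis using SS' f by auto
          next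
            case False
            have "card {g\<in>{1..n} - set C. f < g} \<le> card {g\<in>{1..n} - set C. e < g}"
              using f e by (intro card_mono) auto
            then have "f \<in> capN n C" using e f False S_def unfolding capN_char by auto
            then show ?thesis using set_cap_col S'_def by auto
          qed
        qed
        have "{b\<in>S'. b \<le> v} = S' - {v<..n}" using S'sub by auto
        then have c1: "card {b\<in>S'. b \<le> v} = m - (n - v)" using up lc by (simp add: card_Diff_subset)
        have "{a\<in>X. a \<le> v} = X - (X \<inter> {v<..n})" using X by auto
        then have "card {a\<in>X. a \<le> v} = m - card (X \<inter> {v<..n})" using fX cX
          by (simp add: card_Diff_subset)
        moreover have "card (X \<inter> {v<..n}) \<le> n - v"
          by (metis card_greaterThanAtMost card_mono finite_greaterThanAtMost inf.cobounded2)
        ultimately show ?thesis using c1 by simp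
      qed
    qed
    show ?thesis unfolding e1 e2 using A B by (meson le_trans)
  qed
qed

lemma pick_sub: "finite T \<Longrightarrow> pick T ss \<subseteq> T"
proof (induction ss arbitrary: T)
  case Nil then show ?case by simp
next
  case (Cons s ss)
  show ?case
  proof (cases "{t \<in> T. s \<le> t} = {}")
    case True then show ?thesis using Cons by (simp add: Let_def)
  next
    case False
    have "Min {t \<in> T. s \<le> t} \<in> T" using False Cons.prems Min_in[of "{t \<in> T. s \<le> t}"] by auto
    moreover have "pick (T - {Min {t \<in> T. s \<le> t}}) ss \<subseteq> T" using Cons by blast
    ultimately show ?thesis unfolding pick.simps Let_def if_not_P[OF False] by blast
  qed
qed

lemma foldr_domin_sub:
  "(\<forall>X\<in>set Xs. finite X \<and> X \<subseteq> B) \<Longrightarrow> S \<subseteq> B \<Longrightarrow> foldr domin Xs S \<subseteq> B"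
  by (induction Xs) (auto simp: domin_def dest!: pick_sub)

lemma K_minus_nth:
  "i < length Lt \<Longrightarrow> K_minus Lt ! i = sorted_list_of_set (foldr domin (map set (take i Lt)) (set (Lt!i)))"
  "length (K_minus Lt) = length Lt"
  unfolding K_minus_def by auto

lemma K_minus_sub:
  assumes "\<forall>c<length Lt. set (Lt!c) \<subseteq> {..n}" "i < length Lt"
  shows "foldr domin (map set (take i Lt)) (set (Lt!i)) \<subseteq> {..n}"
proof (rule foldr_domin_sub)
  show "\<forall>X\<in>set (map set (take i Lt)). finite X \<and> X \<subseteq> {..n}"
  proof
    fix X assume "X \<in> set (map set (take i Lt))"
    then obtain c where c: "c < i" "X = set (Lt!c)" by (auto simp: in_set_conv_nth)
    then show "finite X \<and> X \<subseteq> {..n}" using assms by auto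
  qed
qed (use assms in auto)

lemma shape_cap:
  assumes "is_key T" "at_most_rows n T"
  shows "shape (cap n T) = shape T"
  unfolding shape_def cap_def
proof (rule nth_equalityI)
  fix j assume "j < length (map length (map (cap_col n) T))"
  then have j: "j < length T" by simp
  then show "map length (map (cap_col n) T) ! j = map length T ! j"
    using assms card_cap_col(2)[of "T!j" n] unfolding is_key_def at_most_rows_def by auto
qed simp

lemma count_list_distinct: "distinct xs \<Longrightarrow> count_list xs i = (if i \<in> set xs then 1 else 0)"
  by (induction xs) auto

lemma sum_list_swap: "(\<Sum>i\<in>A. sum_list (map (\<lambda>c. f c i) cs)) = sum_list (map (\<lambda>c. \<Sum>i\<in>A. f c i) cs)"
  by (induction cs) (auto simp: sum.distrib)

lemma wsize_cap:
  assumes "is_key T" "at_most_rows n T"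
  shows "wsize n (wt_tab n (cap n T)) = ncells T"
proof -
  have "wsize n (wt_tab n (cap n T)) = (\<Sum>i=1..n. \<Sum>col\<leftarrow>cap n T. count_list col i)"
    unfolding wsize_def wt_tab_def by simp
  also have "\<dots> = (\<Sum>col\<leftarrow>cap n T. \<Sum>i=1..n. count_list col i)" by (rule sum_list_swap)
  also have "\<dots> = (\<Sum>col\<leftarrow>cap n T. length col)"
  proof (rule arg_cong[where f=sum_list], rule map_cong)
    fix col assume "col \<in> set (cap n T)"
    then have "set col \<subseteq> {1..n}" unfolding cap_def using set_cap_col_sub by auto
    then show "(\<Sum>i=1..n. count_list col i) = length col" using sum_count_set by blast
  qed simp
  also have "\<dots> = ncells (cap n T)" unfolding ncells_def shape_def by simp
  also have "\<dots> = ncells T" unfolding ncells_def using shape_cap[OF assms] by simp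
  finally show ?thesis .
qed

lemma key_cap:
  assumes K: "is_key T" and R: "at_most_rows n T"
  shows "key_of n (wt_tab n (cap n T)) = cap n T"
proof -
  define L where "L = length T"
  define D where "D j = set (cap_col n (T!j))" for j
  define \<alpha> where "\<alpha> = wt_tab n (cap n T)"
  have colT: "sorted_wrt (<) (T!j)" "0 \<notin> set (T!j)" "length (T!j) \<le> n" "T!j \<noteq> []" if "j < L" for j
    using K R that unfolding is_key_def at_most_rows_def L_def by auto
  have Dsub: "D j \<subseteq> {1..n}" for j unfolding D_def by (rule set_cap_col_sub)
  have Dne: "D j \<noteq> {}" if "j < L" for j
    using card_cap_col(1)[OF colT(1-3)[OF that]] colT(4)[OF that] unfolding D_def by auto
  have Dstep: "D (Suc j) \<subseteq> D j" if "Suc j < L" for j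
    unfolding D_def using K that unfolding is_key_def L_def
    by (intro cap_col_mono) (auto simp: strict_sorted_iff)
  have Dmono: "D j' \<subseteq> D j" if "j \<le> j'" "j' < L" for j j'
    using that
  proof (induction j')
    case 0 then show ?case by simp
  next
    case (Suc j')
    show ?case
    proof (cases "j = Suc j'")
      case True then show ?thesis by simp
    next
      case False
      then have "D j' \<subseteq> D j" using Suc by simp
      then show ?thesis using Dstep[OF Suc.prems(2)] by blast
    qed
  qed
  have capnth: "cap n T ! j = sorted_list_of_set (D j)" if "j < L" for j
    unfolding D_def cap_def using that L_def
    by (simp, metis cap_col_eq set_cap_col)
  have alpha: "\<alpha> i = card {j. j < L \<and> i \<in> D j}" if "1 \<le> i" "i \<le> n" for i
  proof -
    have "\<alpha> i = (\<Sum>col\<leftarrow>cap n T. count_list col i)" unfolding \<alpha>_def wt_tab_def using that by simp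
    also have "\<dots> = (\<Sum>j=0..<L. count_list (cap n T ! j) i)"
      by (simp add: sum_list_sum_nth L_def cap_def)
    also have "\<dots> = (\<Sum>j=0..<L. if i \<in> D j then 1 else 0)"
    proof (rule sum.cong)
      fix j assume "j \<in> {0..<L}"
      have "distinct (cap n T ! j)" using \<open>j \<in> {0..<L}\<close> L_def by (simp add: cap_def distinct_cap_col)
      moreover have "set (cap n T ! j) = D j" using \<open>j \<in> {0..<L}\<close> L_def by (simp add: cap_def D_def)
      ultimately show "count_list (cap n T ! j) i = (if i \<in> D j then 1 else 0)"
        by (simp add: count_list_distinct)
    qed simp
    also have "\<dots> = card ({0..<L} \<inter> {j. i \<in> D j})" by (simp add: sum.If_cases)
    also have "{0..<L} \<inter> {j. i \<in> D j} = {j. j < L \<and> i \<in> D j}" by auto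
    finally show ?thesis .
  qed
  have ale: "\<alpha> i \<le> L" if "1 \<le> i" "i \<le> n" for i
  proof -
    have "card {j. j < L \<and> i \<in> D j} \<le> card {..<L}" by (intro card_mono) auto
    then show ?thesis using alpha[OF that] by simp
  qed
  have aiff: "c \<le> \<alpha> i \<longleftrightarrow> i \<in> D (c - 1)" if "1 \<le> c" "c \<le> L" "1 \<le> i" "i \<le> n" for c i
  proof
    assume h: "c \<le> \<alpha> i"
    show "i \<in> D (c - 1)"
    proof (rule ccontr)
      assume n: "i \<notin> D (c - 1)"
      have "{j. j < L \<and> i \<in> D j} \<subseteq> {..<c - 1}"
      proof
        fix j assume j: "j \<in> {j. j < L \<and> i \<in> D j}"
        show "j \<in> {..<c - 1}"
        proof (rule ccontr)
          assume "j \<notin> {..<c - 1}"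
          then have "D j \<subseteq> D (c - 1)" using j by (intro Dmono) auto
          then show False using j n by auto
        qed
      qed
      then have "card {j. j < L \<and> i \<in> D j} \<le> c - 1" by (metis card_lessThan card_mono finite_lessThan)
      then show False using h alpha[OF that(3,4)] that(1) by simp
    qed
  next
    assume h: "i \<in> D (c - 1)"
    have "{..<c} \<subseteq> {j. j < L \<and> i \<in> D j}"
    proof
      fix j assume "j \<in> {..<c}"
      then have "D (c - 1) \<subseteq> D j" using that by (intro Dmono) auto
      then show "j \<in> {j. j < L \<and> i \<in> D j}" using h \<open>j \<in> {..<c}\<close> that by auto
    qed
    then have "c \<le> card {j. j < L \<and> i \<in> D j}"
      by (metis card_lessThan card_mono finite_Collect_conjI finite_Collect_less_nat)
    then show "c \<le> \<alpha> i" using alpha[OF that(3,4)] by simp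
  qed
  have Mx: "Max (insert 0 (\<alpha> ` {1..n})) = L"
  proof (rule Max_eqI)
    fix y assume "y \<in> insert 0 (\<alpha> ` {1..n})"
    then show "y \<le> L" using ale by auto
  next
    show "L \<in> insert 0 (\<alpha> ` {1..n})"
    proof (cases "L = 0")
      case False
      then obtain i where i: "i \<in> D (L - 1)" using Dne by (metis diff_less ex_in_conv less_one not_gr_zero)
      then have i1: "1 \<le> i" "i \<le> n" using Dsub[of "L - 1"] by auto
      then have "L \<le> \<alpha> i" using aiff[of L i] i False by simp
      then have "\<alpha> i = L" using ale[OF i1] by simp
      then show ?thesis using i1 by force
    qed simp
  qed simp
  show ?thesis
    unfolding \<alpha>_def[symmetric] key_of_def Mx
  proof (rule nth_equalityI)
    show "length (map (\<lambda>c. filter (\<lambda>i. c \<le> \<alpha> i) [1..<Suc n]) [1..<Suc L]) = length (cap n T)"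
      by (simp add: cap_def L_def del: upt_Suc)
  next
    fix j assume "j < length (map (\<lambda>c. filter (\<lambda>i. c \<le> \<alpha> i) [1..<Suc n]) [1..<Suc L])"
    then have j: "j < L" by (simp del: upt_Suc)
    have "map (\<lambda>c. filter (\<lambda>i. c \<le> \<alpha> i) [1..<Suc n]) [1..<Suc L] ! j = filter (\<lambda>i. Suc j \<le> \<alpha> i) [1..<Suc n]"
      using j by (simp add: nth_upt del: upt_Suc)
    also have "\<dots> = filter (\<lambda>i. i \<in> D j) [1..<Suc n]"
      by (rule filter_cong) (use aiff[of "Suc j"] j in auto)
    also have "\<dots> = sorted_list_of_set (D j)"
    proof -
      have "sorted_wrt (<) (filter (\<lambda>i. i \<in> D j) [1..<Suc n])"
        by (rule sorted_wrt_filter) (simp only: sorted_wrt_upt)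
      moreover have "set (filter (\<lambda>i. i \<in> D j) [1..<Suc n]) = D j" using Dsub[of j] by auto
      ultimately show ?thesis
        by (metis sorted_list_of_set.idem_if_sorted_distinct strict_sorted_iff)
    qed
    also have "\<dots> = cap n T ! j" using capnth[OF j] by simp
    finally show "map (\<lambda>c. filter (\<lambda>i. c \<le> \<alpha> i) [1..<Suc n]) [1..<Suc L] ! j = cap n T ! j" .
  qed
qed

lemma Lmax_sub:
  assumes "is_rsvt Q" "rsvt_entries Q \<subseteq> {..n}"
  shows "\<forall>c<length (Lmax Q). set (Lmax Q ! c) \<subseteq> {..n}"
proof (intro allI impI subsetI)
  fix c y assume c: "c < length (Lmax Q)" and y: "y \<in> set (Lmax Q ! c)"
  have c': "c < length Q" using c by (simp add: Lmax_def)
  then obtain r where r: "r < length (Q!c)" "y = Max (Q!c!r)" using y by (auto simp: Lmax_def in_set_conv_nth)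
  have "finite (Q!c!r)" "Q!c!r \<noteq> {}" using assms(1) c' r unfolding is_rsvt_def by auto
  then have "y \<in> Q!c!r" using r Max_in by simp
  moreover have "Q!c!r \<in> set (concat Q)"
    using nth_mem[OF c'] nth_mem[OF r(1)] unfolding set_concat by blast
  ultimately have "y \<in> rsvt_entries Q" unfolding rsvt_entries_def by blast
  then show "y \<in> {..n}" using assms(2) by blast
qed

lemma entries_iff:
  assumes "is_rsvt Q"
  shows "rsvt_entries Q \<subseteq> {..n} \<longleftrightarrow> rsvt_entries Q \<subseteq> {1..n}"
proof -
  have "0 \<notin> rsvt_entries Q"
  proof
    assume "0 \<in> rsvt_entries Q"
    then obtain S where S: "S \<in> set (concat Q)" "0 \<in> S" unfolding rsvt_entries_def by blast
    then obtain col where col: "col \<in> set Q" "S \<in> set col" unfolding set_concat by blast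
    then obtain c where c: "c < length Q" "col = Q!c" by (metis in_set_conv_nth)
    then obtain r where r: "r < length (Q!c)" "S = Q!c!r" using col by (metis in_set_conv_nth)
    have "0 \<notin> Q!c!r" using assms c r unfolding is_rsvt_def by blast
    then show False using S r by simp
  qed
  then show ?thesis by (auto simp: subset_eq) (metis Suc_leI gr0I One_nat_def)+
qed

lemma entrywise_iff:
  assumes K: "is_key T" and R: "at_most_rows n T"
    and Q: "is_rsvt Q" "shape Q = shape T" "rsvt_entries Q \<subseteq> {..n}"
  shows "entrywise_le (K_minus (Lmax Q)) T \<longleftrightarrow> entrywise_le (K_minus (Lmax Q)) (cap n T)"
proof -
  define Lt where "Lt = Lmax Q"
  have lenQ: "length Q = length T" using Q(2) unfolding shape_def by (metis length_map)
  have lK: "length (K_minus Lt) = length T" using lenQ by (simp add: K_minus_nth(2) Lt_def Lmax_def)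
  have lc: "length (cap n T) = length T" by (simp add: cap_def)
  have sub: "\<forall>c<length Lt. set (Lt!c) \<subseteq> {..n}" using Lmax_sub[OF Q(1,3)] Lt_def by simp
  have col: "list_all2 (\<le>) (K_minus Lt ! j) (T!j) \<longleftrightarrow> list_all2 (\<le>) (K_minus Lt ! j) (cap n T ! j)"
    if j: "j < length T" for j
  proof -
    have jl: "j < length Lt" using j lenQ by (simp add: Lt_def Lmax_def)
    have "K_minus Lt ! j = sorted_list_of_set (foldr domin (map set (take j Lt)) (set (Lt!j)))"
      by (rule K_minus_nth(1)[OF jl])
    moreover have "foldr domin (map set (take j Lt)) (set (Lt!j)) \<subseteq> {..n}"
      by (rule K_minus_sub[OF sub jl])
    moreover have "sorted_wrt (<) (T!j)" "0 \<notin> set (T!j)" "length (T!j) \<le> n"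
      using K R j unfolding is_key_def at_most_rows_def by auto
    moreover have "cap n T ! j = cap_col n (T!j)" using j by (simp add: cap_def)
    ultimately show ?thesis using col_lemma by simp
  qed
  show ?thesis unfolding entrywise_le_def Lt_def[symmetric] list_all2_conv_all_nth[where P="list_all2 (\<le>)"]
    using lK lc col by auto
qed

theorem corollary3p3:
  fixes T :: "nat list list" and n :: nat and \<beta> :: "'a::comm_ring_1" and x :: "nat \<Rightarrow> 'a"
  assumes "is_key T" and "at_most_rows n T"
  shows "(\<Sum>Q\<in>{Q. is_rsvt Q \<and> shape Q = shape T \<and> entrywise_le (K_minus (Lmax Q)) T \<and>
                  rsvt_entries Q \<subseteq> {..n}}.
            \<beta> ^ (rsvt_size Q - ncells T) * xpow n x (wt_rsvt Q))
         = lascoux n \<beta> x (wt_tab n (cap n T))"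
proof -
  have setEq: "{Q. is_rsvt Q \<and> shape Q = shape T \<and> entrywise_le (K_minus (Lmax Q)) T \<and>
                  rsvt_entries Q \<subseteq> {..n}} =
     {Q. is_rsvt Q \<and> rsvt_entries Q \<subseteq> {1..n} \<and> shape Q = shape (key_of n (wt_tab n (cap n T))) \<and>
             entrywise_le (K_minus (Lmax Q)) (key_of n (wt_tab n (cap n T)))}"
    (is "?A = ?B")
  proof (rule set_eqI)
    fix Q
    show "Q \<in> ?A \<longleftrightarrow> Q \<in> ?B"
      unfolding key_cap[OF assms] shape_cap[OF assms] mem_Collect_eq
      using entries_iff[of Q n] entrywise_iff[OF assms, of Q] by blast
  qed
  show ?thesis unfolding lascoux_def wsize_cap[OF assms] setEq[symmetric] ..
qed

end
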